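(* There is an absolute constant $C$ such that the following holds. Let $\mu=\sum_{\ell=1}^k\alpha_\ell\mu_\ell$ be a mixture of $c$-isoperimetric probability measures on $\mathbb R^d$ ($\alpha_\ell\ge0$, $\sum\alpha_\ell=1$). Let $\mathcal F$ be a finite class of $L$-Lipschitz functions $f:\mathbb R^d\to\mathbb R$ with $|f(x)|\le1$ for all $f\in\mathcal F$, $x\in\mathbb R^d$. Then \[ \mathrm{Rad}_{n,\mu}(\mathcal F)\le C\max\Big(\sqrt{\tfrac kn},\ L\sqrt{\tfrac{c\log|\mathcal F|}{nd}}\Big). \]
   Context: $\mathrm{Rad}_{n,\mu}(\mathcal F)=\frac1n\mathbb E\big[\sup_{f\in\mathcal F}\big|\sum_{i=1}^n\sigma_if(x_i)\big|\big]$, where $\sigma_1,\dots,\sigma_n$ are i.i.d. uniform in $\{-1,1\}$ and $x_1,\dots,x_n$ are i.i.d. from $\mu$, independent of the $\sigma_i$. A probability measure $\nu$ on $\mathbb R^d$ satisfies $c$-isoperimetry if for every bounded $L$-Lipschitz $f:\mathbb R^d\to\mathbb R$ and every $t\ge0$, $\mathbb P_{x\sim\nu}[|f(x)-\mathbb E_\nu f|\ge t]\le 2e^{-dt^2/(2cL^2)}$. *)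

theory Defs
  imports "HOL-Probability.Probability"
begin

text \<open>R^d is encoded as functions nat => real on the index set {..<d}
 (extensional outside), with the product Borel sigma algebra.\<close>

definition Rd :: "nat \<Rightarrow> (nat \<Rightarrow> real) measure" where
  "Rd d = PiM {..<d} (\<lambda>_. lborel)"

definition edist :: "nat \<Rightarrow> (nat \<Rightarrow> real) \<Rightarrow> (nat \<Rightarrow> real) \<Rightarrow> real" where
  "edist d x y = sqrt (\<Sum>i<d. (x i - y i)^2)"

definition lipschitz_Rd :: "nat \<Rightarrow> real \<Rightarrow> ((nat \<Rightarrow> real) \<Rightarrow> real) \<Rightarrow> bool" where
  "lipschitz_Rd d L f \<longleftrightarrow>
     (\<forall>x\<in>space (Rd d). \<forall>y\<in>space (Rd d). \<bar>f x - f y\<bar> \<le> L * edist d x y)"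

definition isoperimetric :: "nat \<Rightarrow> real \<Rightarrow> (nat \<Rightarrow> real) measure \<Rightarrow> bool" where
  "isoperimetric d c \<nu> \<longleftrightarrow> prob_space \<nu> \<and> sets \<nu> = sets (Rd d) \<and>
     (\<forall>f L t. f \<in> borel_measurable (Rd d) \<and> (\<exists>B. \<forall>x\<in>space (Rd d). \<bar>f x\<bar> \<le> B)
        \<and> L > 0 \<and> lipschitz_Rd d L f \<and> t \<ge> 0 \<longrightarrow>
        measure \<nu> {x \<in> space \<nu>. \<bar>f x - (\<integral>y. f y \<partial>\<nu>)\<bar> \<ge> t}
          \<le> 2 * exp (- (real d * t^2) / (2 * c * L^2)))"

definition rad :: "nat \<Rightarrow> (nat \<Rightarrow> real) measure \<Rightarrow> ((nat \<Rightarrow> real) \<Rightarrow> real) set \<Rightarrow> real" where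
  "rad n \<mu> F = (1 / real n) *
     (\<integral>xs. (\<Sum>\<sigma>\<in>PiE {..<n} (\<lambda>_. {-1, 1::real}).
               Max ((\<lambda>f. \<bar>\<Sum>i<n. \<sigma> i * f (xs i)\<bar>) ` F)) / 2 ^ n
        \<partial>(PiM {..<n} (\<lambda>_. \<mu>)))"

end

theory Submission
  imports Defs "HOL-Real_Asymp.Real_Asymp"
begin


definition Pn :: "nat \<Rightarrow> (nat \<Rightarrow> real) set" where
  "Pn n = PiE {..<n} (\<lambda>_. {-1, 1::real})"

lemma finite_Pn [simp]: "finite (Pn n)"
  unfolding Pn_def by (intro finite_PiE) auto

lemma card_Pn: "card (Pn n) = 2 ^ n"
  unfolding Pn_def by (subst card_PiE) (auto simp: numeral_2_eq_2)

lemma sum_exp_Pn: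
  "(\<Sum>\<sigma>\<in>Pn n. exp (\<Sum>i<n. \<sigma> i * b i)) = (\<Prod>i<n. 2 * cosh (b i))"
proof -
  have "(\<Prod>i<n. 2 * cosh (b i)) = (\<Prod>i<n. \<Sum>y\<in>{-1,1::real}. exp (y * b i))"
    by (intro prod.cong refl) (simp add: cosh_field_def)
  also have "\<dots> = (\<Sum>g\<in>Pn n. \<Prod>i<n. exp (g i * b i))"
    unfolding Pn_def by (rule prod_sum_PiE) auto
  also have "\<dots> = (\<Sum>\<sigma>\<in>Pn n. exp (\<Sum>i<n. \<sigma> i * b i))"
    by (simp add: exp_sum)
  finally show ?thesis ..
qed

lemma avg_exp_Pn:
  "(\<Sum>\<sigma>\<in>Pn n. exp (\<Sum>i<n. \<sigma> i * b i)) / 2 ^ n = (\<Prod>i<n. cosh (b i))"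
  by (simp add: sum_exp_Pn prod.distrib)

lemma max_bound_pointwise:
  fixes Y :: "'j \<Rightarrow> real"
  assumes J: "finite J" "J \<noteq> {}" and l: "l > 0" and W: "W > 0"
  shows "Max ((\<lambda>j. \<bar>Y j\<bar>) ` J) \<le> (ln W - 1) / l
           + (\<Sum>j\<in>J. exp (l * Y j) + exp (- (l * Y j))) / (l * W)"
proof -
  let ?S = "\<Sum>j\<in>J. exp (l * Y j) + exp (- (l * Y j))"
  obtain j0 where j0: "j0 \<in> J" "Max ((\<lambda>j. \<bar>Y j\<bar>) ` J) = \<bar>Y j0\<bar>"
    using J by (metis (no_types, lifting) Max_in finite_imageI image_iff image_is_empty)
  have "exp (l * \<bar>Y j0\<bar>) \<le> exp (l * Y j0) + exp (- (l * Y j0))"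
    by (cases "Y j0 \<ge> 0") auto
  also have "\<dots> \<le> ?S"
    using j0 J by (intro member_le_sum[where f = "\<lambda>j. exp (l * Y j) + exp (- (l * Y j))"]) auto
  finally have e: "exp (l * \<bar>Y j0\<bar>) \<le> ?S" .
  have Spos: "?S > 0" using J by (intro sum_pos) (auto intro: add_pos_pos)
  have "l * \<bar>Y j0\<bar> \<le> ln ?S" using e Spos by (metis ln_exp ln_le_cancel_iff exp_gt_zero)
  also have "ln ?S = ln W + ln (?S / W)" using Spos W by (simp add: ln_div)
  also have "ln (?S / W) \<le> ?S / W - 1" using Spos W by (intro ln_le_minus_one) auto
  finally have "l * \<bar>Y j0\<bar> \<le> ln W - 1 + ?S / W" by simp
  hence "\<bar>Y j0\<bar> \<le> (ln W - 1 + ?S / W) / l" using l by (simp add: field_simps)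
  also have "\<dots> = (ln W - 1) / l + ?S / (l * W)" using l W by (simp add: field_simps)
  finally show ?thesis using j0 by simp
qed

lemma max_bound_avg:
  fixes B :: "'j \<Rightarrow> nat \<Rightarrow> real"
  assumes J: "finite J" "J \<noteq> {}" and l: "l > 0" and W: "W > 0"
  shows "(\<Sum>\<sigma>\<in>Pn n. Max ((\<lambda>j. \<bar>\<Sum>i<n. \<sigma> i * B j i\<bar>) ` J)) / 2 ^ n
          \<le> (ln W - 1) / l + 2 * (\<Sum>j\<in>J. \<Prod>i<n. cosh (l * B j i)) / (l * W)"
proof -
  have "(\<Sum>\<sigma>\<in>Pn n. Max ((\<lambda>j. \<bar>\<Sum>i<n. \<sigma> i * B j i\<bar>) ` J))
      \<le> (\<Sum>\<sigma>\<in>Pn n. (ln W - 1) / l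
           + (\<Sum>j\<in>J. exp (l * (\<Sum>i<n. \<sigma> i * B j i)) + exp (- (l * (\<Sum>i<n. \<sigma> i * B j i)))) / (l * W))"
    by (intro sum_mono max_bound_pointwise[OF J l W])
  also have "\<dots> = 2 ^ n * ((ln W - 1) / l) + (\<Sum>j\<in>J. (\<Sum>\<sigma>\<in>Pn n. exp (\<Sum>i<n. \<sigma> i * (l * B j i)))
        + (\<Sum>\<sigma>\<in>Pn n. exp (\<Sum>i<n. \<sigma> i * (- l * B j i)))) / (l * W)"
    by (simp add: sum.distrib card_Pn sum_divide_distrib[symmetric] sum.swap[of _ "Pn n" J]
        sum_distrib_left sum_negf[symmetric] algebra_simps)
  also have "\<dots> = 2 ^ n * ((ln W - 1) / l) + 2 ^ n * (2 * (\<Sum>j\<in>J. \<Prod>i<n. cosh (l * B j i))) / (l * W)"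
  proof -
    have m: "(\<Sum>\<sigma>\<in>Pn n. exp (\<Sum>i<n. \<sigma> i * (- l * B j i))) = 2 ^ n * (\<Prod>i<n. cosh (l * B j i))" for j
      using sum_exp_Pn[where n=n and b="\<lambda>i. - l * B j i"] by (simp add: prod.distrib)
    have p: "(\<Sum>\<sigma>\<in>Pn n. exp (\<Sum>i<n. \<sigma> i * (l * B j i))) = 2 ^ n * (\<Prod>i<n. cosh (l * B j i))" for j
      using sum_exp_Pn[where n=n and b="\<lambda>i. l * B j i"] by (simp add: prod.distrib)
    show ?thesis by (simp only: m p sum.distrib sum_distrib_left[symmetric]) simp
  qed
  finally show ?thesis by (simp add: field_simps)
qed

lemma cosh_le_exp_pos:
  fixes l :: real assumes "l > 0"
  shows "cosh l \<le> exp (l\<^sup>2 / 2)"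
proof -
  let ?M = "measure_pmf (pmf_of_set {-1, 1::real})"
  interpret interval_bounded_random_variable ?M "\<lambda>x. x" "-1" "1"
    by unfold_locales (auto simp: AE_measure_pmf_iff)
  have E: "measure_pmf.expectation (pmf_of_set {-1, 1::real}) (\<lambda>x. x) = 0"
    by (subst integral_pmf_of_set) auto
  have "nn_integral ?M (\<lambda>x. exp (l * x)) \<le> ennreal (exp (l\<^sup>2 * (1 - -1)\<^sup>2 / 8))"
    by (rule Hoeffdings_lemma_nn_integral_0[OF assms E])
  moreover have "nn_integral ?M (\<lambda>x. exp (l * x)) = ennreal (cosh l)"
  proof -
    have "nn_integral ?M (\<lambda>x. exp (l * x)) = (\<Sum>x\<in>{-1,1::real}. ennreal (exp (l * x))) / 2"
      by (subst nn_integral_pmf_of_set) auto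
    also have "(\<Sum>x\<in>{-1,1::real}. ennreal (exp (l * x))) = ennreal (exp (-l)) + ennreal (exp l)"
      by simp
    also have "\<dots> = ennreal (exp (-l) + exp l)"
      by (rule ennreal_plus[symmetric]) auto
    also have "ennreal (exp (-l) + exp l) / 2 = ennreal ((exp (-l) + exp l) / 2)"
      using divide_ennreal[of "exp (-l) + exp l" 2] by simp
    finally show ?thesis by (simp add: cosh_field_def add.commute)
  qed
  ultimately show ?thesis by (simp add: power2_eq_square)
qed

lemma cosh_le_exp:
  fixes l :: real
  shows "cosh l \<le> exp (l\<^sup>2 / 2)"
proof -
  have "cosh \<bar>l\<bar> \<le> exp (\<bar>l\<bar>\<^sup>2 / 2)" if "l \<noteq> 0" using that by (intro cosh_le_exp_pos) auto
  then show ?thesis by (cases "l = 0") auto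
qed


lemma prod_cosh_le:
  fixes l :: real and b :: "nat \<Rightarrow> real"
  shows "(\<Prod>i<n. cosh (l * b i)) \<le> exp (l\<^sup>2 / 2 * (\<Sum>i<n. (b i)\<^sup>2))"
proof -
  have "(\<Prod>i<n. cosh (l * b i)) \<le> (\<Prod>i<n. exp (l\<^sup>2 / 2 * (b i)\<^sup>2))"
    by (intro prod_mono conjI) (auto intro: order.trans[OF cosh_le_exp] simp: power_mult_distrib)
  also have "\<dots> = exp (l\<^sup>2 / 2 * (\<Sum>i<n. (b i)\<^sup>2))"
    by (simp add: exp_sum sum_distrib_left)
  finally show ?thesis .
qed

lemma avg_abs_bound:
  assumes l: "l > 0" and V: "(\<Sum>i<n. (b i)\<^sup>2) \<le> V"
  shows "(\<Sum>\<sigma>\<in>Pn n. \<bar>\<Sum>i<n. \<sigma> i * b i\<bar>) / 2 ^ n \<le> (ln 2 + l\<^sup>2 * V / 2) / l"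
proof -
  define W where "W = 2 * exp (l\<^sup>2 * V / 2)"
  have W: "W > 0" by (simp add: W_def)
  have "(\<Sum>\<sigma>\<in>Pn n. \<bar>\<Sum>i<n. \<sigma> i * b i\<bar>) / 2 ^ n
      = (\<Sum>\<sigma>\<in>Pn n. Max ((\<lambda>j. \<bar>\<Sum>i<n. \<sigma> i * (\<lambda>_::unit. b) j i\<bar>) ` {()})) / 2 ^ n"
    by simp
  also have "\<dots> \<le> (ln W - 1) / l + 2 * (\<Sum>j\<in>{()}. \<Prod>i<n. cosh (l * (\<lambda>_::unit. b) j i)) / (l * W)"
    by (rule max_bound_avg[OF _ _ l W]) auto
  also have "(\<Sum>j\<in>{()}. \<Prod>i<n. cosh (l * (\<lambda>_::unit. b) j i)) \<le> exp (l\<^sup>2 * V / 2)"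
  proof -
    have "(\<Sum>j\<in>{()}. \<Prod>i<n. cosh (l * (\<lambda>_::unit. b) j i)) \<le> exp (l\<^sup>2 / 2 * (\<Sum>i<n. (b i)\<^sup>2))"
      using prod_cosh_le by simp
    also have "\<dots> \<le> exp (l\<^sup>2 * V / 2)"
      using V by (simp add: mult_left_mono)
    finally show ?thesis .
  qed
  hence "(ln W - 1) / l + 2 * (\<Sum>j\<in>{()}. \<Prod>i<n. cosh (l * (\<lambda>_::unit. b) j i)) / (l * W)
       \<le> (ln W - 1) / l + 2 * exp (l\<^sup>2 * V / 2) / (l * W)"
    using l W by (intro add_left_mono divide_right_mono mult_left_mono) auto
  also have "\<dots> = (ln 2 + l\<^sup>2 * V / 2) / l"
    using l by (simp add: W_def ln_mult field_simps)
  finally show ?thesis .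
qed

lemma first_term:
  assumes lab: "\<And>i. i < n \<Longrightarrow> lab i \<in> {1..k}" and n: "n \<ge> 1" and k: "k \<ge> 1"
  shows "(\<Sum>\<sigma>\<in>Pn n. (\<Sum>q=1..k. \<bar>\<Sum>i<n. \<sigma> i * (if lab i = q then 1 else 0)\<bar>)) / 2 ^ n
           \<le> 2 * sqrt (real k * real n)"
proof -
  define l where "l = sqrt (real k / real n)"
  have l: "l > 0" using n k by (simp add: l_def)
  have "(\<Sum>\<sigma>\<in>Pn n. (\<Sum>q=1..k. \<bar>\<Sum>i<n. \<sigma> i * (if lab i = q then 1 else 0)\<bar>)) / 2 ^ n
     = (\<Sum>q=1..k. (\<Sum>\<sigma>\<in>Pn n. \<bar>\<Sum>i<n. \<sigma> i * (if lab i = q then 1 else 0)\<bar>) / 2 ^ n)"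
    by (simp add: sum.swap[of _ "Pn n"] sum_divide_distrib)
  also have "\<dots> \<le> (\<Sum>q=1..k. (ln 2 + l\<^sup>2 * (\<Sum>i<n. (if lab i = q then 1 else 0)) / 2) / l)"
    by (intro sum_mono avg_abs_bound l) (simp add: if_distrib)
  also have "\<dots> = (real k * ln 2 + l\<^sup>2 * (\<Sum>q=1..k. \<Sum>i<n. (if lab i = q then 1 else 0)) / 2) / l"
    by (simp add: sum.distrib sum_divide_distrib[symmetric] sum_distrib_left add_divide_distrib)
  also have "(\<Sum>q=1..k. \<Sum>i<n. (if lab i = q then 1 else 0::real)) = real n"
  proof -
    have "(\<Sum>q=1..k. \<Sum>i<n. (if lab i = q then 1 else 0::real)) = (\<Sum>i<n. \<Sum>q=1..k. (if lab i = q then 1 else 0::real))"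
      by (rule sum.swap)
    also have "\<dots> = (\<Sum>i<n. 1)"
      using lab by (intro sum.cong refl) (simp add: sum.delta)
    finally show ?thesis by simp
  qed
  also have "(real k * ln 2 + l\<^sup>2 * real n / 2) / l = sqrt (real k * real n) * (ln 2 + 1 / 2)"
  proof -
    have "l\<^sup>2 = real k / real n" using n by (simp add: l_def)
    moreover have "sqrt (real k * real n) * l = real k"
      using n k by (simp add: l_def real_sqrt_mult[symmetric])
    ultimately have e1: "real n * l\<^sup>2 = real k" and e2: "real k / l = sqrt (real k * real n)"
      using l n by (auto simp: field_simps)
    have "(real k * ln 2 + l\<^sup>2 * real n / 2) / l = (real k / l) * (ln 2 + 1 / 2)"
      using e1 l by (simp add: field_simps)
    then show ?thesis using e2 by simp
  qed
  also have "\<dots> \<le> sqrt (real k * real n) * 2"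
    using ln_2_less_1 by (intro mult_left_mono) auto
  finally show ?thesis by simp
qed



lemma borel_measurable_sinh[measurable (raw)]:
  "f \<in> borel_measurable M \<Longrightarrow> (\<lambda>x. sinh (f x :: real)) \<in> borel_measurable M"
proof -
  assume f: "f \<in> borel_measurable M"
  have "(sinh :: real \<Rightarrow> real) \<in> borel_measurable borel"
    by (intro borel_measurable_continuous_onI continuous_on_sinh continuous_on_id)
  from measurable_compose[OF f this] show ?thesis by simp
qed

lemma borel_measurable_cosh[measurable (raw)]:
  "f \<in> borel_measurable M \<Longrightarrow> (\<lambda>x. cosh (f x :: real)) \<in> borel_measurable M"
proof -
  assume f: "f \<in> borel_measurable M"
  have "(cosh :: real \<Rightarrow> real) \<in> borel_measurable borel"
    by (intro borel_measurable_continuous_onI continuous_on_cosh continuous_on_id)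
  from measurable_compose[OF f this] show ?thesis by simp
qed

lemma meas_ind_interval[measurable (raw)]:
  fixes Y :: "'a \<Rightarrow> real"
  assumes [measurable]: "Y \<in> borel_measurable N"
  shows "(\<lambda>p. indicator {0..\<bar>Y (fst p)\<bar>} (snd p) :: ennreal) \<in> borel_measurable (N \<Otimes>\<^sub>M lborel)"
proof -
  have s[measurable]: "(\<lambda>p. snd p :: real) \<in> borel_measurable (N \<Otimes>\<^sub>M lborel)"
    using measurable_snd[of N lborel] by (simp add: measurable_cong_sets[OF refl sets_lborel])
  have g: "(\<lambda>p. \<bar>Y (fst p)\<bar>) \<in> borel_measurable (N \<Otimes>\<^sub>M lborel)"
    using measurable_compose[OF measurable_fst assms, of lborel] by (simp add: comp_def borel_measurable_abs)
  have A: "{p \<in> space (N \<Otimes>\<^sub>M lborel). snd p \<le> \<bar>Y (fst p)\<bar>} \<in> sets (N \<Otimes>\<^sub>M lborel)"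
    by (rule borel_measurable_le[OF s g])
  have B: "{p \<in> space (N \<Otimes>\<^sub>M lborel). (\<lambda>_. 0::real) p \<le> snd p} \<in> sets (N \<Otimes>\<^sub>M lborel)"
    by (rule borel_measurable_le[OF _ s]) simp
  have "indicator ({p \<in> space (N \<Otimes>\<^sub>M lborel). snd p \<le> \<bar>Y (fst p)\<bar>} \<inter> {p \<in> space (N \<Otimes>\<^sub>M lborel). (\<lambda>_. 0::real) p \<le> snd p}) \<in> borel_measurable (N \<Otimes>\<^sub>M lborel)"
    using A B by (intro borel_measurable_indicator) auto
  then show ?thesis
    by (rule measurable_cong[THEN iffD1, rotated]) (auto simp: indicator_def)
qed

lemma layer_cake_cosh:
  assumes P: "prob_space N" and Y[measurable]: "Y \<in> borel_measurable N" and l: "l > (0::real)"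
  shows "(\<integral>\<^sup>+x. ennreal (cosh (l * Y x)) \<partial>N)
       = 1 + (\<integral>\<^sup>+t. ennreal (l * sinh (l * t)) * indicator {0..} t * emeasure N {x\<in>space N. t \<le> \<bar>Y x\<bar>} \<partial>lborel)"
proof -
  interpret prob_space N by (rule P)
  interpret pair_sigma_finite N lborel by unfold_locales
  let ?g = "\<lambda>t::real. l * sinh (l * t)"
  have g_meas[measurable]: "?g \<in> borel_measurable borel"
    by (intro borel_measurable_continuous_onI continuous_intros)
  have pw: "ennreal (cosh (l * Y x)) = 1 + (\<integral>\<^sup>+t. ennreal (?g t) * indicator {0..\<bar>Y x\<bar>} t \<partial>lborel)" for x
  proof -
    have "(\<integral>\<^sup>+t. ennreal (?g t) * indicator {0..\<bar>Y x\<bar>} t \<partial>lborel) = ennreal (cosh (l * \<bar>Y x\<bar>) - cosh (l * 0))"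
    proof (rule nn_integral_FTC_Icc)
      fix t assume t: "t \<in> {0..\<bar>Y x\<bar>}"
      show "((\<lambda>t. cosh (l * t)) has_real_derivative ?g t) (at t)"
        by (auto intro!: derivative_eq_intros)
      show "0 \<le> ?g t" using t l by (auto intro!: mult_nonneg_nonneg simp: sinh_real_nonneg_iff)
    qed auto
    also have "cosh (l * \<bar>Y x\<bar>) = cosh (l * Y x)"
    proof -
      have "l * \<bar>Y x\<bar> = \<bar>l * Y x\<bar>" using l by (simp add: abs_mult)
      then show ?thesis by simp
    qed
    moreover have "ennreal (cosh (l * Y x)) = 1 + ennreal (cosh (l * Y x) - 1)"
      using cosh_real_ge_1[of "l * Y x"] ennreal_plus[of 1 "cosh (l * Y x) - 1"] by simp
    ultimately show ?thesis by simp
  qed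
  have "(\<integral>\<^sup>+x. ennreal (cosh (l * Y x)) \<partial>N)
      = (\<integral>\<^sup>+x. 1 + (\<integral>\<^sup>+t. ennreal (?g t) * indicator {0..\<bar>Y x\<bar>} t \<partial>lborel) \<partial>N)"
    by (simp add: pw)
  also have "\<dots> = 1 + (\<integral>\<^sup>+x. (\<integral>\<^sup>+t. ennreal (?g t) * indicator {0..\<bar>Y x\<bar>} t \<partial>lborel) \<partial>N)"
  proof -
    have j: "(\<lambda>(x, t). ennreal (?g t) * indicator {0..\<bar>Y x\<bar>} t) \<in> borel_measurable (N \<Otimes>\<^sub>M lborel)"
      by measurable
    have "(\<lambda>x. \<integral>\<^sup>+t. ennreal (?g t) * indicator {0..\<bar>Y x\<bar>} t \<partial>lborel) \<in> borel_measurable N"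
      using j by measurable
    then show ?thesis by (subst nn_integral_add) (auto simp: emeasure_space_1)
  qed
  also have "(\<integral>\<^sup>+x. (\<integral>\<^sup>+t. ennreal (?g t) * indicator {0..\<bar>Y x\<bar>} t \<partial>lborel) \<partial>N)
      = (\<integral>\<^sup>+t. (\<integral>\<^sup>+x. ennreal (?g t) * indicator {0..\<bar>Y x\<bar>} t \<partial>N) \<partial>lborel)"
    by (rule Fubini'[symmetric]) measurable
  also have "\<dots> = (\<integral>\<^sup>+t. ennreal (?g t) * indicator {0..} t * emeasure N {x\<in>space N. t \<le> \<bar>Y x\<bar>} \<partial>lborel)"
  proof (rule nn_integral_cong)
    fix t :: real
    have "(\<integral>\<^sup>+x. ennreal (?g t) * indicator {0..\<bar>Y x\<bar>} t \<partial>N)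
        = (\<integral>\<^sup>+x. (ennreal (?g t) * indicator {0..} t) * indicator {x\<in>space N. t \<le> \<bar>Y x\<bar>} x \<partial>N)"
      by (intro nn_integral_cong) (auto simp: indicator_def)
    also have "\<dots> = ennreal (?g t) * indicator {0..} t * emeasure N {x\<in>space N. t \<le> \<bar>Y x\<bar>}"
      by (rule nn_integral_cmult_indicator) measurable
    finally show "(\<integral>\<^sup>+x. ennreal (?g t) * indicator {0..\<bar>Y x\<bar>} t \<partial>N) = \<dots>" .
  qed
  finally show ?thesis .
qed

lemma gauss_int:
  assumes s2: "s2 > (0::real)"
  shows "(\<integral>\<^sup>+t. ennreal (t * exp (- t\<^sup>2 / (4 * s2))) * indicator {0..} t \<partial>lborel) = ennreal (2 * s2)"
proof -
  have "(\<integral>\<^sup>+t. ennreal (t * exp (- t\<^sup>2 / (4 * s2))) * indicator {0..} t \<partial>lborel)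
      = ennreal (0 - (- 2 * s2 * exp (- 0\<^sup>2 / (4 * s2))))"
  proof (rule nn_integral_FTC_atLeast)
    show "(\<lambda>t. t * exp (- t\<^sup>2 / (4 * s2))) \<in> borel_measurable borel"
      using s2 by (intro borel_measurable_continuous_onI continuous_intros) auto
    fix x :: real
    show "((\<lambda>t. - 2 * s2 * exp (- t\<^sup>2 / (4 * s2))) has_real_derivative x * exp (- x\<^sup>2 / (4 * s2))) (at x)"
      using s2 by (auto intro!: derivative_eq_intros simp: field_simps power2_eq_square)
    assume "0 \<le> x" then show "0 \<le> x * exp (- x\<^sup>2 / (4 * s2))" by simp
  next
    show "((\<lambda>t. - 2 * s2 * exp (- t\<^sup>2 / (4 * s2))) \<longlongrightarrow> 0) at_top"
      using s2 by real_asymp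
  qed
  then show ?thesis by simp
qed

lemma sinh_le_aux:
  assumes "u \<ge> (0::real)" shows "sinh u \<le> u * exp u"
proof -
  have "1 - exp (- (2 * u)) \<le> 2 * u" using exp_ge_add_one_self[of "- (2 * u)"] by simp
  hence "exp u * (1 - exp (- (2 * u))) \<le> exp u * (2 * u)" by (intro mult_left_mono) auto
  moreover have "exp u * exp (- (2 * u)) = exp (- u)" by (simp add: exp_add[symmetric])
  ultimately show ?thesis by (simp add: sinh_field_def field_simps)
qed

lemma subg_pointwise:
  assumes l: "l > 0" and s2: "s2 > (0::real)" and t: "t \<ge> 0"
  shows "l * sinh (l * t) * (2 * exp (- t\<^sup>2 / (2 * s2)))
          \<le> 2 * l\<^sup>2 * exp (l\<^sup>2 * s2) * (t * exp (- t\<^sup>2 / (4 * s2)))"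
proof -
  have "sinh (l * t) \<le> l * t * exp (l * t)" using l t by (intro sinh_le_aux) auto
  hence "l * sinh (l * t) * (2 * exp (- t\<^sup>2 / (2 * s2))) \<le> l * (l * t * exp (l * t)) * (2 * exp (- t\<^sup>2 / (2 * s2)))"
    using l by (intro mult_right_mono mult_left_mono) auto
  also have "\<dots> = 2 * l\<^sup>2 * t * (exp (l * t) * exp (- t\<^sup>2 / (2 * s2)))"
    by (simp add: power2_eq_square)
  also have "exp (l * t) * exp (- t\<^sup>2 / (2 * s2)) = exp (l * t - t\<^sup>2 / (2 * s2))"
    by (simp add: exp_add[symmetric])
  also have "exp (l * t - t\<^sup>2 / (2 * s2)) \<le> exp (l\<^sup>2 * s2 - t\<^sup>2 / (4 * s2))"
  proof -
    have "0 \<le> (t - 2 * l * s2)\<^sup>2 / (4 * s2)" using s2 by simp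
    also have "(t - 2 * l * s2)\<^sup>2 / (4 * s2) = t\<^sup>2 / (4 * s2) - l * t + l\<^sup>2 * s2"
      using s2 by (simp add: power2_eq_square field_simps)
    finally show ?thesis by (simp add: field_simps)
  qed
  hence "2 * l\<^sup>2 * t * exp (l * t - t\<^sup>2 / (2 * s2)) \<le> 2 * l\<^sup>2 * t * exp (l\<^sup>2 * s2 - t\<^sup>2 / (4 * s2))"
    using t by (intro mult_left_mono) auto
  also have "\<dots> = 2 * l\<^sup>2 * exp (l\<^sup>2 * s2) * (t * exp (- t\<^sup>2 / (4 * s2)))"
    by (simp add: exp_diff exp_minus field_simps)
  finally show ?thesis .
qed

lemma subg_cosh:
  fixes Y :: "'a \<Rightarrow> real"
  assumes P: "prob_space N" and Y[measurable]: "Y \<in> borel_measurable N" and l: "l > 0" and s2: "s2 > 0"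
    and tail: "\<And>t. t \<ge> 0 \<Longrightarrow> emeasure N {x\<in>space N. t \<le> \<bar>Y x\<bar>} \<le> ennreal (2 * exp (- t\<^sup>2 / (2 * s2)))"
  shows "(\<integral>\<^sup>+x. ennreal (cosh (l * Y x)) \<partial>N) \<le> ennreal (exp (5 * l\<^sup>2 * s2))"
proof -
  let ?K = "2 * l\<^sup>2 * exp (l\<^sup>2 * s2)"
  let ?X = "(\<integral>\<^sup>+t. ennreal (l * sinh (l * t)) * indicator {0..} t * emeasure N {x\<in>space N. t \<le> \<bar>Y x\<bar>} \<partial>lborel)"
  have lc: "(\<integral>\<^sup>+x. ennreal (cosh (l * Y x)) \<partial>N) = 1 + ?X"
    by (rule layer_cake_cosh[OF P Y l])
  have "?X \<le> (\<integral>\<^sup>+t. ennreal ?K * (ennreal (t * exp (- t\<^sup>2 / (4 * s2))) * indicator {0..} t) \<partial>lborel)"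
  proof (rule nn_integral_mono)
    fix t :: real
    show "ennreal (l * sinh (l * t)) * indicator {0..} t * emeasure N {x\<in>space N. t \<le> \<bar>Y x\<bar>}
        \<le> ennreal ?K * (ennreal (t * exp (- t\<^sup>2 / (4 * s2))) * indicator {0..} t)"
    proof (cases "t \<ge> 0")
      case True
      have "ennreal (l * sinh (l * t)) * emeasure N {x\<in>space N. t \<le> \<bar>Y x\<bar>}
          \<le> ennreal (l * sinh (l * t)) * ennreal (2 * exp (- t\<^sup>2 / (2 * s2)))"
        by (intro mult_left_mono tail True) auto
      also have "\<dots> = ennreal (l * sinh (l * t) * (2 * exp (- t\<^sup>2 / (2 * s2))))"
        using True l by (subst ennreal_mult) (auto intro!: mult_nonneg_nonneg)
      also have "\<dots> \<le> ennreal (?K * (t * exp (- t\<^sup>2 / (4 * s2))))"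
        by (intro ennreal_leI subg_pointwise l s2 True)
      also have "\<dots> = ennreal ?K * ennreal (t * exp (- t\<^sup>2 / (4 * s2)))"
        using True by (subst ennreal_mult) auto
      finally show ?thesis using True by simp
    qed simp
  qed
  also have "\<dots> = ennreal ?K * (\<integral>\<^sup>+t. ennreal (t * exp (- t\<^sup>2 / (4 * s2))) * indicator {0..} t \<partial>lborel)"
    by (rule nn_integral_cmult) measurable
  also have "\<dots> = ennreal ?K * ennreal (2 * s2)"
    by (simp only: gauss_int[OF s2])
  also have "ennreal ?K * ennreal (2 * s2) = ennreal (?K * (2 * s2))"
    using s2 by (intro ennreal_mult[symmetric]) auto
  finally have Xb: "?X \<le> ennreal (?K * (2 * s2))" .
  have "(\<integral>\<^sup>+x. ennreal (cosh (l * Y x)) \<partial>N) \<le> 1 + ennreal (?K * (2 * s2))"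
    unfolding lc using Xb by (rule add_left_mono)
  also have "1 + ennreal (?K * (2 * s2)) = ennreal (1 + ?K * (2 * s2))"
    using s2 ennreal_plus[of 1 "?K * (2 * s2)"] by simp
  also have "ennreal (1 + ?K * (2 * s2)) \<le> ennreal (exp (5 * l\<^sup>2 * s2))"
  proof (rule ennreal_leI)
    define u where "u = l\<^sup>2 * s2"
    have u: "u \<ge> 0" using s2 by (simp add: u_def)
    have "1 + ?K * (2 * s2) = 1 + 4 * u * exp u" by (simp add: u_def algebra_simps)
    also have "\<dots> \<le> (1 + 4 * u) * exp u" using u by (simp add: algebra_simps)
    also have "\<dots> \<le> exp (4 * u) * exp u"
      using exp_ge_add_one_self[of "4 * u"] by (intro mult_right_mono) auto
    also have "\<dots> = exp (5 * u)" by (simp add: exp_add[symmetric])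
    finally show "1 + ?K * (2 * s2) \<le> exp (5 * l\<^sup>2 * s2)" by (simp add: u_def mult.assoc)
  qed
  finally show ?thesis .
qed



lemma mixture_nn_integral:
  fixes R :: "'a measure"
  assumes sets_mu: "sets mu = sets R" and Pmu: "prob_space mu"
    and comp: "\<And>l. l \<in> {1..k} \<Longrightarrow> prob_space (ms l) \<and> sets (ms l) = sets R"
    and alpha: "\<And>l. l \<in> {1..k} \<Longrightarrow> alpha l \<ge> (0::real)"
    and mix: "\<And>A. A \<in> sets mu \<Longrightarrow> measure mu A = (\<Sum>l=1..k. alpha l * measure (ms l) A)"
    and k: "k \<ge> (1::nat)"
    and h: "h \<in> borel_measurable R"
  shows "(\<integral>\<^sup>+x. h x \<partial>mu) = (\<Sum>l=1..k. ennreal (alpha l) * (\<integral>\<^sup>+x. h x \<partial>ms l))"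
proof -
  define M where "M = point_measure {1..k} (\<lambda>l. ennreal (alpha l))"
  have spM: "space M = {1..k}" by (simp add: M_def space_point_measure)
  have ne: "space M \<noteq> {}" using k by (simp add: spM)
  have K: "ms \<in> measurable M (subprob_algebra R)"
  proof (rule measurable_subprob_algebra)
    fix a assume "a \<in> space M" then have a: "a \<in> {1..k}" by (simp add: spM)
    show "subprob_space (ms a)" using comp[OF a] by (simp add: prob_space_imp_subprob_space)
    show "sets (ms a) = sets R" using comp[OF a] by simp
  next
    fix A assume "A \<in> sets R"
    show "(\<lambda>a. emeasure (ms a) A) \<in> borel_measurable M"
      unfolding M_def by simp
  qed
  have eq: "mu = M \<bind> ms"
  proof (rule measure_eqI)
    show "sets mu = sets (M \<bind> ms)"
      using sets_bind[OF _ ne, of ms R] comp sets_mu by (simp add: spM)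
  next
    fix A assume A: "A \<in> sets mu"
    hence AR: "A \<in> sets R" using sets_mu by simp
    have "emeasure (M \<bind> ms) A = (\<integral>\<^sup>+l. emeasure (ms l) A \<partial>M)"
      by (rule emeasure_bind[OF ne K AR])
    also have "\<dots> = (\<Sum>l=1..k. ennreal (alpha l) * emeasure (ms l) A)"
      unfolding M_def by (simp add: nn_integral_point_measure_finite)
    also have "\<dots> = (\<Sum>l=1..k. ennreal (alpha l * measure (ms l) A))"
    proof (intro sum.cong refl)
      fix l assume l: "l \<in> {1..k}"
      interpret prob_space "ms l" using comp[OF l] by simp
      show "ennreal (alpha l) * emeasure (ms l) A = ennreal (alpha l * measure (ms l) A)"
        using alpha[OF l] by (simp add: emeasure_eq_measure ennreal_mult)
    qed
    also have "\<dots> = ennreal (\<Sum>l=1..k. alpha l * measure (ms l) A)"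
      using alpha by (subst sum_ennreal) (auto intro!: mult_nonneg_nonneg)
    also have "\<dots> = emeasure mu A"
      using mix[OF A] Pmu by (simp add: finite_measure.emeasure_eq_measure prob_space_def)
    finally show "emeasure mu A = emeasure (M \<bind> ms) A" ..
  qed
  have "(\<integral>\<^sup>+x. h x \<partial>mu) = (\<integral>\<^sup>+l. (\<integral>\<^sup>+x. h x \<partial>ms l) \<partial>M)"
    unfolding eq by (rule nn_integral_bind[OF h K])
  also have "\<dots> = (\<Sum>l=1..k. ennreal (alpha l) * (\<integral>\<^sup>+x. h x \<partial>ms l))"
    unfolding M_def by (simp add: nn_integral_point_measure_finite)
  finally show ?thesis .
qed

lemma meas_inner_int:
  fixes R :: "'a measure"
  assumes N: "prob_space N" "sets N = sets R" and i: "i \<notin> I"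
    and h: "h \<in> borel_measurable (PiM (insert i I) (\<lambda>_. R))"
  shows "(\<lambda>x. \<integral>\<^sup>+y. h (x(i := y)) \<partial>N) \<in> borel_measurable (PiM I (\<lambda>_. R))"
proof -
  interpret prob_space N by (rule N(1))
  have "(\<lambda>(f, y). f(i := y)) \<in> measurable (PiM I (\<lambda>_. R) \<Otimes>\<^sub>M R) (PiM (insert i I) (\<lambda>_. R))"
    using measurable_add_dim[of i I "\<lambda>_. R"] by simp
  hence "(\<lambda>(f, y). f(i := y)) \<in> measurable (PiM I (\<lambda>_. R) \<Otimes>\<^sub>M N) (PiM (insert i I) (\<lambda>_. R))"
    by (subst measurable_cong_sets[OF sets_pair_measure_cong[OF refl N(2)] refl])
  hence "(\<lambda>p. h ((\<lambda>(f, y). f(i := y)) p)) \<in> borel_measurable (PiM I (\<lambda>_. R) \<Otimes>\<^sub>M N)"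
    using h by (rule measurable_compose)
  hence "case_prod (\<lambda>x y. h (x(i := y))) \<in> borel_measurable (PiM I (\<lambda>_. R) \<Otimes>\<^sub>M N)"
    by (simp add: case_prod_beta)
  then show ?thesis by (rule borel_measurable_nn_integral)
qed

lemma mixture_PiM:
  fixes R :: "'a measure"
  assumes sets_mu: "sets mu = sets R" and Pmu: "prob_space mu"
    and comp: "\<And>l. l \<in> {1..k} \<Longrightarrow> prob_space (ms l) \<and> sets (ms l) = sets R"
    and alpha: "\<And>l. l \<in> {1..k} \<Longrightarrow> alpha l \<ge> (0::real)"
    and mix: "\<And>A. A \<in> sets mu \<Longrightarrow> measure mu A = (\<Sum>l=1..k. alpha l * measure (ms l) A)"
    and k: "k \<ge> (1::nat)"
    and I: "finite I"
  shows "h \<in> borel_measurable (PiM I (\<lambda>_. R)) \<Longrightarrow>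
    (\<integral>\<^sup>+x. h x \<partial>PiM I (\<lambda>_. mu)) =
      (\<Sum>lab\<in>PiE I (\<lambda>_. {1..k}). ennreal (\<Prod>j\<in>I. alpha (lab j)) * (\<integral>\<^sup>+x. h x \<partial>PiM I (\<lambda>j. ms (lab j))))"
  using I
proof (induction I arbitrary: h rule: finite_induct)
  case empty
  show ?case by (simp add: PiM_empty)
next
  case (insert i I)
  note hR = insert.prems
  interpret PM: product_sigma_finite "\<lambda>_. mu"
    using Pmu by (simp add: product_sigma_finite_def prob_space_imp_sigma_finite)
  have setsPi: "sets (PiM J (\<lambda>_. mu)) = sets (PiM J (\<lambda>_. R))" for J
    by (rule sets_PiM_cong) (auto simp: sets_mu)
  have spPi: "space (PiM J (\<lambda>_. mu)) = space (PiM J (\<lambda>_. R))" for J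
    by (rule sets_eq_imp_space_eq[OF setsPi])
  define H where "H a x = (\<integral>\<^sup>+y. h (x(i := y)) \<partial>ms a)" for a x
  have Hm: "H a \<in> borel_measurable (PiM I (\<lambda>_. R))" if a: "a \<in> {1..k}" for a
    unfolding H_def using comp[OF a] insert.hyps hR by (intro meas_inner_int) auto
  have "(\<integral>\<^sup>+x. h x \<partial>PiM (insert i I) (\<lambda>_. mu)) = (\<integral>\<^sup>+x. (\<integral>\<^sup>+y. h (x(i := y)) \<partial>mu) \<partial>PiM I (\<lambda>_. mu))"
    using insert.hyps hR by (intro PM.product_nn_integral_insert) (auto simp: measurable_cong_sets[OF setsPi refl])
  also have "\<dots> = (\<integral>\<^sup>+x. (\<Sum>a=1..k. ennreal (alpha a) * H a x) \<partial>PiM I (\<lambda>_. mu))"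
  proof (rule nn_integral_cong)
    fix x assume x: "x \<in> space (PiM I (\<lambda>_. mu))"
    have xs: "x \<in> space (PiM I (\<lambda>_. R))" using x by (simp add: spPi)
    have "(\<lambda>v. x(i := v)) \<in> measurable R (PiM (insert i I) (\<lambda>_. R))"
      using measurable_component_update[OF xs insert.hyps(2)] by simp
    then have hm: "(\<lambda>y. h (x(i := y))) \<in> borel_measurable R"
      by (rule measurable_compose[OF _ hR])
    then show "(\<integral>\<^sup>+y. h (x(i := y)) \<partial>mu) = (\<Sum>a=1..k. ennreal (alpha a) * H a x)"
      unfolding H_def using mixture_nn_integral[OF sets_mu Pmu comp alpha mix k hm] by simp
  qed
  also have "\<dots> = (\<Sum>a=1..k. ennreal (alpha a) * (\<integral>\<^sup>+x. H a x \<partial>PiM I (\<lambda>_. mu)))"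
    using Hm by (subst nn_integral_sum) (auto simp: measurable_cong_sets[OF setsPi refl] intro!: sum.cong nn_integral_cmult)
  also have "\<dots> = (\<Sum>a=1..k. ennreal (alpha a) * (\<Sum>lab\<in>PiE I (\<lambda>_. {1..k}).
        ennreal (\<Prod>j\<in>I. alpha (lab j)) * (\<integral>\<^sup>+x. H a x \<partial>PiM I (\<lambda>j. ms (lab j)))))"
    using Hm by (intro sum.cong refl) (simp add: insert.IH)
  also have "\<dots> = (\<Sum>(a, lab)\<in>{1..k} \<times> PiE I (\<lambda>_. {1..k}).
        ennreal (\<Prod>j\<in>insert i I. alpha ((lab(i := a)) j)) * (\<integral>\<^sup>+x. h x \<partial>PiM (insert i I) (\<lambda>j. ms ((lab(i := a)) j))))"
  proof -
    have key: "ennreal (alpha a) * (ennreal (\<Prod>j\<in>I. alpha (lab j)) * (\<integral>\<^sup>+x. H a x \<partial>PiM I (\<lambda>j. ms (lab j))))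
       = ennreal (\<Prod>j\<in>insert i I. alpha ((lab(i := a)) j)) * (\<integral>\<^sup>+x. h x \<partial>PiM (insert i I) (\<lambda>j. ms ((lab(i := a)) j)))"
      if a: "a \<in> {1..k}" and lab: "lab \<in> PiE I (\<lambda>_. {1..k})" for a lab
    proof -
      define M' where "M' j = ms (if j \<in> insert i I then (lab(i := a)) j else 1)" for j
      have M'in: "prob_space (M' j) \<and> sets (M' j) = sets R" for j
        unfolding M'_def using a lab k by (intro comp) (auto simp: PiE_def Pi_def)
      interpret Q: product_sigma_finite M'
        using M'in by (simp add: product_sigma_finite_def prob_space_imp_sigma_finite)
      have sQ: "sets (PiM (insert i I) M') = sets (PiM (insert i I) (\<lambda>_. R))"
        by (rule sets_PiM_cong) (auto simp: M'in)
      have e1: "PiM (insert i I) M' = PiM (insert i I) (\<lambda>j. ms ((lab(i := a)) j))"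
        by (rule PiM_cong) (auto simp: M'_def)
      have e2: "PiM I M' = PiM I (\<lambda>j. ms (lab j))"
        using insert.hyps by (intro PiM_cong) (auto simp: M'_def)
      have e3: "M' i = ms a" by (simp add: M'_def)
      have "(\<integral>\<^sup>+x. h x \<partial>PiM (insert i I) M') = (\<integral>\<^sup>+x. (\<integral>\<^sup>+y. h (x(i := y)) \<partial>M' i) \<partial>PiM I M')"
        using insert.hyps hR by (intro Q.product_nn_integral_insert) (auto simp: measurable_cong_sets[OF sQ refl])
      hence I1: "(\<integral>\<^sup>+x. h x \<partial>PiM (insert i I) (\<lambda>j. ms ((lab(i := a)) j))) = (\<integral>\<^sup>+x. H a x \<partial>PiM I (\<lambda>j. ms (lab j)))"
        by (simp add: e1 e2 e3 H_def)
      have "(\<Prod>j\<in>insert i I. alpha ((lab(i := a)) j)) = alpha a * (\<Prod>j\<in>I. alpha (lab j))"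
      proof -
        have "(\<Prod>j\<in>I. alpha ((lab(i := a)) j)) = (\<Prod>j\<in>I. alpha (lab j))"
          using insert.hyps by (intro prod.cong) auto
        then show ?thesis using insert.hyps by simp
      qed
      moreover have "(\<Prod>j\<in>I. alpha (lab j)) \<ge> 0"
        using lab alpha by (intro prod_nonneg) (auto simp: PiE_def Pi_def)
      ultimately show ?thesis using alpha[OF a] I1
        by (simp add: ennreal_mult mult.assoc)
    qed
    show ?thesis
      by (simp add: sum_distrib_left sum.cartesian_product key)
  qed
  also have "\<dots> = (\<Sum>lab\<in>PiE (insert i I) (\<lambda>_. {1..k}).
        ennreal (\<Prod>j\<in>insert i I. alpha (lab j)) * (\<integral>\<^sup>+x. h x \<partial>PiM (insert i I) (\<lambda>j. ms (lab j))))"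
    using insert.hyps
    by (intro sum.reindex_bij_witness[of _ "\<lambda>g. (g i, g(i := undefined))" "\<lambda>(a, lab). lab(i := a)"])
       (auto simp: PiE_def extensional_def)
  finally show ?case .
qed



lemma sigma_decomp:
  fixes F :: "'f set" and g :: "'f \<Rightarrow> nat \<Rightarrow> real" and mm :: "nat \<Rightarrow> 'f \<Rightarrow> real"
  assumes F: "finite F" "F \<noteq> {}"
    and lab: "\<And>i. i < n \<Longrightarrow> lab i \<in> {1..k}"
    and mm: "\<And>q f. q \<in> {1..k} \<Longrightarrow> f \<in> F \<Longrightarrow> \<bar>mm q f\<bar> \<le> 1"
  shows "Max ((\<lambda>f. \<bar>\<Sum>i<n. \<sigma> i * g f i\<bar>) ` F)
     \<le> (\<Sum>q=1..k. \<bar>\<Sum>i<n. \<sigma> i * (if lab i = q then 1 else 0)\<bar>)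
        + Max ((\<lambda>f. \<bar>\<Sum>i<n. \<sigma> i * (g f i - mm (lab i) f)\<bar>) ` F)"
proof (subst Max_le_iff, goal_cases)
  case 3
  show ?case
  proof
    fix y assume "y \<in> (\<lambda>f. \<bar>\<Sum>i<n. \<sigma> i * g f i\<bar>) ` F"
    then obtain f where f: "f \<in> F" and y: "y = \<bar>\<Sum>i<n. \<sigma> i * g f i\<bar>" by auto
    have split: "(\<Sum>i<n. \<sigma> i * g f i) = (\<Sum>i<n. \<sigma> i * mm (lab i) f) + (\<Sum>i<n. \<sigma> i * (g f i - mm (lab i) f))"
      by (simp add: sum.distrib[symmetric] algebra_simps)
    have "(\<Sum>i<n. \<sigma> i * mm (lab i) f) = (\<Sum>i<n. \<Sum>q=1..k. mm q f * (\<sigma> i * (if lab i = q then 1 else 0)))"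
      using lab by (intro sum.cong refl) (simp add: if_distrib sum.delta cong: if_cong)
    also have "\<dots> = (\<Sum>q=1..k. mm q f * (\<Sum>i<n. \<sigma> i * (if lab i = q then 1 else 0)))"
      by (subst sum.swap) (simp add: sum_distrib_left)
    finally have e: "(\<Sum>i<n. \<sigma> i * mm (lab i) f) = \<dots>" .
    have "\<bar>\<Sum>i<n. \<sigma> i * mm (lab i) f\<bar> \<le> (\<Sum>q=1..k. \<bar>\<Sum>i<n. \<sigma> i * (if lab i = q then 1 else 0)\<bar>)"
    proof -
      have "\<bar>\<Sum>q=1..k. mm q f * (\<Sum>i<n. \<sigma> i * (if lab i = q then 1 else 0))\<bar>
          \<le> (\<Sum>q=1..k. \<bar>mm q f * (\<Sum>i<n. \<sigma> i * (if lab i = q then 1 else 0))\<bar>)"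
        by (rule sum_abs)
      also have "\<dots> \<le> (\<Sum>q=1..k. \<bar>\<Sum>i<n. \<sigma> i * (if lab i = q then 1 else 0)\<bar>)"
      proof (rule sum_mono)
        fix q assume q: "q \<in> {1..k}"
        show "\<bar>mm q f * (\<Sum>i<n. \<sigma> i * (if lab i = q then 1 else 0))\<bar> \<le> \<bar>\<Sum>i<n. \<sigma> i * (if lab i = q then 1 else 0)\<bar>"
          using mm[OF q f] by (simp add: abs_mult mult_left_le_one_le)
      qed
      finally show ?thesis using e by simp
    qed
    moreover have "\<bar>\<Sum>i<n. \<sigma> i * (g f i - mm (lab i) f)\<bar> \<le> Max ((\<lambda>f. \<bar>\<Sum>i<n. \<sigma> i * (g f i - mm (lab i) f)\<bar>) ` F)"
      using F f by (intro Max_ge) auto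
    ultimately show "y \<le> (\<Sum>q=1..k. \<bar>\<Sum>i<n. \<sigma> i * (if lab i = q then 1 else 0)\<bar>)
        + Max ((\<lambda>f. \<bar>\<Sum>i<n. \<sigma> i * (g f i - mm (lab i) f)\<bar>) ` F)"
      unfolding y split by linarith
  qed
qed (use F in auto)

lemma pw_bound:
  fixes F :: "'f set" and g :: "'f \<Rightarrow> nat \<Rightarrow> real" and mm :: "nat \<Rightarrow> 'f \<Rightarrow> real"
  assumes F: "finite F" "F \<noteq> {}"
    and lab: "\<And>i. i < n \<Longrightarrow> lab i \<in> {1..k}"
    and mm: "\<And>q f. q \<in> {1..k} \<Longrightarrow> f \<in> F \<Longrightarrow> \<bar>mm q f\<bar> \<le> 1"
    and n: "n \<ge> 1" and k: "k \<ge> 1" and l: "l > 0" and W: "W > 0"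
  shows "(\<Sum>\<sigma>\<in>Pn n. Max ((\<lambda>f. \<bar>\<Sum>i<n. \<sigma> i * g f i\<bar>) ` F)) / 2 ^ n
     \<le> 2 * sqrt (real k * real n) + (ln W - 1) / l
        + 2 * (\<Sum>f\<in>F. \<Prod>i<n. cosh (l * (g f i - mm (lab i) f))) / (l * W)"
proof -
  have "(\<Sum>\<sigma>\<in>Pn n. Max ((\<lambda>f. \<bar>\<Sum>i<n. \<sigma> i * g f i\<bar>) ` F)) / 2 ^ n
     \<le> (\<Sum>\<sigma>\<in>Pn n. (\<Sum>q=1..k. \<bar>\<Sum>i<n. \<sigma> i * (if lab i = q then 1 else 0)\<bar>)
        + Max ((\<lambda>f. \<bar>\<Sum>i<n. \<sigma> i * (g f i - mm (lab i) f)\<bar>) ` F)) / 2 ^ n"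
    by (intro divide_right_mono sum_mono sigma_decomp[OF F lab mm]) auto
  also have "\<dots> = (\<Sum>\<sigma>\<in>Pn n. (\<Sum>q=1..k. \<bar>\<Sum>i<n. \<sigma> i * (if lab i = q then 1 else 0)\<bar>)) / 2 ^ n
        + (\<Sum>\<sigma>\<in>Pn n. Max ((\<lambda>f. \<bar>\<Sum>i<n. \<sigma> i * (g f i - mm (lab i) f)\<bar>) ` F)) / 2 ^ n"
    by (simp add: sum.distrib add_divide_distrib)
  also have "\<dots> \<le> 2 * sqrt (real k * real n) + ((ln W - 1) / l
        + 2 * (\<Sum>f\<in>F. \<Prod>i<n. cosh (l * (g f i - mm (lab i) f))) / (l * W))"
    by (intro add_mono first_term[OF lab n k]
          max_bound_avg[OF F l W, where B = "\<lambda>f i. g f i - mm (lab i) f"]) auto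
  finally show ?thesis by simp
qed

lemma iso_basic:
  assumes "isoperimetric d c \<nu>"
  shows "prob_space \<nu>" "sets \<nu> = sets (Rd d)" "space \<nu> = space (Rd d)"
proof -
  show p: "prob_space \<nu>" and s: "sets \<nu> = sets (Rd d)" using assms unfolding isoperimetric_def by auto
  show "space \<nu> = space (Rd d)" by (rule sets_eq_imp_space_eq[OF s])
qed

lemma iso_cosh:
  fixes f :: "(nat \<Rightarrow> real) \<Rightarrow> real"
  assumes iso: "isoperimetric d c \<nu>" and d: "d \<ge> 1" and c: "c > 0" and L: "L > 0"
    and fm: "f \<in> borel_measurable (Rd d)" and fb: "\<forall>x\<in>space (Rd d). \<bar>f x\<bar> \<le> 1"
    and fl: "lipschitz_Rd d L f" and l: "l > 0"
  shows "(\<integral>\<^sup>+y. ennreal (cosh (l * (f y - (\<integral>y. f y \<partial>\<nu>)))) \<partial>\<nu>) \<le> ennreal (exp (5 * l\<^sup>2 * (c * L\<^sup>2 / real d)))"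
proof -
  note b = iso_basic[OF iso]
  interpret prob_space \<nu> by (rule b(1))
  define s2 where "s2 = c * L\<^sup>2 / real d"
  have s2: "s2 > 0" using c L d by (simp add: s2_def)
  have fmn: "f \<in> borel_measurable \<nu>" unfolding measurable_cong_sets[OF b(2) refl] by (rule fm)
  let ?Y = "\<lambda>y. f y - (\<integral>y. f y \<partial>\<nu>)"
  have Ym: "?Y \<in> borel_measurable \<nu>" using fmn by measurable
  show ?thesis unfolding s2_def[symmetric]
  proof (rule subg_cosh[OF b(1) Ym l s2])
    fix t :: real assume t: "t \<ge> 0"
    have "measure \<nu> {x \<in> space \<nu>. \<bar>f x - (\<integral>y. f y \<partial>\<nu>)\<bar> \<ge> t} \<le> 2 * exp (- (real d * t\<^sup>2) / (2 * c * L\<^sup>2))"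
    proof -
      have H: "\<forall>f L t. f \<in> borel_measurable (Rd d) \<and> (\<exists>B. \<forall>x\<in>space (Rd d). \<bar>f x\<bar> \<le> B)
        \<and> L > 0 \<and> lipschitz_Rd d L f \<and> t \<ge> 0 \<longrightarrow>
        measure \<nu> {x \<in> space \<nu>. \<bar>f x - (\<integral>y. f y \<partial>\<nu>)\<bar> \<ge> t}
          \<le> 2 * exp (- (real d * t^2) / (2 * c * L^2))"
        using iso unfolding isoperimetric_def by (elim conjE)
      have pre: "f \<in> borel_measurable (Rd d) \<and> (\<exists>B. \<forall>x\<in>space (Rd d). \<bar>f x\<bar> \<le> B)
        \<and> L > 0 \<and> lipschitz_Rd d L f \<and> t \<ge> 0" using fm fb L fl t by blast
      show ?thesis using H[rule_format, OF pre] by simp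
    qed
    also have "- (real d * t\<^sup>2) / (2 * c * L\<^sup>2) = - t\<^sup>2 / (2 * s2)"
      using c L d by (simp add: s2_def field_simps)
    finally show "emeasure \<nu> {x \<in> space \<nu>. t \<le> \<bar>?Y x\<bar>} \<le> ennreal (2 * exp (- t\<^sup>2 / (2 * s2)))"
      by (simp add: emeasure_eq_measure)
  qed
qed


lemma mm_bound:
  fixes f :: "(nat \<Rightarrow> real) \<Rightarrow> real"
  assumes iso: "isoperimetric d c \<nu>" and fm: "f \<in> borel_measurable (Rd d)"
    and fb: "\<forall>x\<in>space (Rd d). \<bar>f x\<bar> \<le> 1"
  shows "\<bar>\<integral>y. f y \<partial>\<nu>\<bar> \<le> 1"
proof -
  note b = iso_basic[OF iso]
  interpret prob_space \<nu> by (rule b(1))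
  have fmn: "f \<in> borel_measurable \<nu>" unfolding measurable_cong_sets[OF b(2) refl] by (rule fm)
  have ae: "AE x in \<nu>. \<bar>f x\<bar> \<le> 1" using fb b(3) by auto
  have int: "integrable \<nu> f"
    by (rule integrable_const_bound[where B=1]) (use ae fmn in auto)
  have "(\<integral>y. f y \<partial>\<nu>) \<le> 1" by (rule integral_le_const[OF int]) (use ae in auto)
  moreover have "-1 \<le> (\<integral>y. f y \<partial>\<nu>)" by (rule integral_ge_const[OF int]) (use ae in auto)
  ultimately show ?thesis by simp
qed

lemma lab_bound:
  fixes F :: "((nat \<Rightarrow> real) \<Rightarrow> real) set" and \<mu>s :: "nat \<Rightarrow> (nat \<Rightarrow> real) measure"
  assumes d: "d \<ge> 1" and c: "c > 0" and L: "L > 0" and n: "n \<ge> 1" and k: "k \<ge> 1"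
    and lab: "lab \<in> PiE {..<n} (\<lambda>_. {1..k})"
    and iso: "\<And>l. l \<in> {1..k} \<Longrightarrow> isoperimetric d c (\<mu>s l)"
    and F: "finite F" and F2: "card F \<ge> 2"
    and Fp: "\<And>f. f \<in> F \<Longrightarrow> f \<in> borel_measurable (Rd d) \<and> lipschitz_Rd d L f \<and> (\<forall>x\<in>space (Rd d). \<bar>f x\<bar> \<le> 1)"
  shows "(\<integral>\<^sup>+xs. ennreal ((\<Sum>\<sigma>\<in>Pn n. Max ((\<lambda>f. \<bar>\<Sum>i<n. \<sigma> i * f (xs i)\<bar>) ` F)) / 2 ^ n) \<partial>PiM {..<n} (\<lambda>i. \<mu>s (lab i)))
     \<le> ennreal (2 * sqrt (real k * real n) + 7 * sqrt (real n * (c * L\<^sup>2 / real d) * ln (real (card F))))"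
proof -
  define s2 where "s2 = c * L\<^sup>2 / real d"
  have s2: "s2 > 0" using c L d by (simp add: s2_def)
  define N where "N = card F"
  have Fne: "F \<noteq> {}" using F2 by auto
  have N2: "real N \<ge> 2" using F2 by (simp add: N_def)
  have lnN: "ln (real N) > 0" using N2 by simp
  define l where "l = sqrt (ln (real N) / (real n * s2))"
  have l: "l > 0" using lnN n s2 by (simp add: l_def)
  have l2: "real n * l\<^sup>2 * s2 = ln (real N)" using lnN n s2 by (simp add: l_def)
  define W where "W = 2 * real N * exp (5 * real n * l\<^sup>2 * s2)"
  have W: "W > 0" using N2 by (simp add: W_def)
  have W3: "W \<ge> 3"
  proof -
    have "2 * real N * 1 \<le> W" unfolding W_def using N2 s2 by (intro mult_left_mono) (auto intro!: mult_nonneg_nonneg)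
    then show ?thesis using N2 by simp
  qed
  have lnW1: "ln W \<ge> 1"
  proof -
    have "exp 1 \<le> W" using exp_le W3 by linarith
    then show ?thesis using W by (metis ln_exp ln_le_cancel_iff exp_gt_zero)
  qed
  define mm where "mm q (f :: (nat \<Rightarrow> real) \<Rightarrow> real) = (\<integral>y. f y \<partial>\<mu>s q)" for q f
  have labi: "\<And>i. i < n \<Longrightarrow> lab i \<in> {1..k}" using lab by (auto simp: PiE_def Pi_def)
  have mmb: "\<And>q f. q \<in> {1..k} \<Longrightarrow> f \<in> F \<Longrightarrow> \<bar>mm q f\<bar> \<le> 1"
    unfolding mm_def using iso Fp by (intro mm_bound) auto
  define M' where "M' i = \<mu>s (if i < n then lab i else 1)" for i
  have M'i: "isoperimetric d c (M' i)" for i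
    unfolding M'_def using labi k by (intro iso) auto
  have M'p: "prob_space (M' i)" "sets (M' i) = sets (Rd d)" for i
    using iso_basic[OF M'i] by auto
  interpret Q: product_sigma_finite M'
    using M'p by (simp add: product_sigma_finite_def prob_space_imp_sigma_finite)
  interpret QP: prob_space "PiM {..<n} M'"
    using M'p by (intro prob_space_PiM) auto
  have PiM_eq: "PiM {..<n} M' = PiM {..<n} (\<lambda>i. \<mu>s (lab i))" by (rule PiM_cong) (auto simp: M'_def)
  define C0 where "C0 = 2 * sqrt (real k * real n) + (ln W - 1) / l"
  have C0: "C0 \<ge> 0" using lnW1 l by (simp add: C0_def)
  define c2 where "c2 = 2 / (l * W)"
  have c2: "c2 \<ge> 0" using l W by (simp add: c2_def)
  define H where "H f xs = (\<Prod>i<n. ennreal (cosh (l * (f (xs i) - mm (lab i) f))))" for f xs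
  have pw: "ennreal ((\<Sum>\<sigma>\<in>Pn n. Max ((\<lambda>f. \<bar>\<Sum>i<n. \<sigma> i * f (xs i)\<bar>) ` F)) / 2 ^ n)
      \<le> ennreal C0 + ennreal c2 * (\<Sum>f\<in>F. H f xs)" for xs
  proof -
    have "(\<Sum>\<sigma>\<in>Pn n. Max ((\<lambda>f. \<bar>\<Sum>i<n. \<sigma> i * f (xs i)\<bar>) ` F)) / 2 ^ n
       \<le> 2 * sqrt (real k * real n) + (ln W - 1) / l
        + 2 * (\<Sum>f\<in>F. \<Prod>i<n. cosh (l * (f (xs i) - mm (lab i) f))) / (l * W)"
      by (rule pw_bound[OF F Fne labi mmb n k l W])
    also have "\<dots> = C0 + c2 * (\<Sum>f\<in>F. \<Prod>i<n. cosh (l * (f (xs i) - mm (lab i) f)))"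
      by (simp add: C0_def c2_def)
    finally have r: "(\<Sum>\<sigma>\<in>Pn n. Max ((\<lambda>f. \<bar>\<Sum>i<n. \<sigma> i * f (xs i)\<bar>) ` F)) / 2 ^ n
       \<le> C0 + c2 * (\<Sum>f\<in>F. \<Prod>i<n. cosh (l * (f (xs i) - mm (lab i) f)))" .
    have S: "(\<Sum>f\<in>F. H f xs) = ennreal (\<Sum>f\<in>F. \<Prod>i<n. cosh (l * (f (xs i) - mm (lab i) f)))"
      unfolding H_def by (simp add: prod_ennreal sum_ennreal prod_nonneg sum_nonneg)
    have nn: "0 \<le> (\<Sum>f\<in>F. \<Prod>i<n. cosh (l * (f (xs i) - mm (lab i) f)))"
      by (intro sum_nonneg prod_nonneg) auto
    have "ennreal (C0 + c2 * (\<Sum>f\<in>F. \<Prod>i<n. cosh (l * (f (xs i) - mm (lab i) f))))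
      = ennreal C0 + ennreal c2 * ennreal (\<Sum>f\<in>F. \<Prod>i<n. cosh (l * (f (xs i) - mm (lab i) f)))"
      by (simp only: ennreal_plus[OF C0 mult_nonneg_nonneg[OF c2 nn]] ennreal_mult[OF c2 nn])
    then show ?thesis
      using ennreal_leI[OF r] by (simp only: S)
  qed
  have Hm: "H f \<in> borel_measurable (PiM {..<n} M')" if f: "f \<in> F" for f
  proof -
    have fm: "f \<in> borel_measurable (M' i)" for i
      unfolding measurable_cong_sets[OF M'p(2)[of i] refl] using Fp[OF f] by simp
    have fc: "(\<lambda>xs. f (xs i)) \<in> borel_measurable (PiM {..<n} M')" if "i \<in> {..<n}" for i
      using measurable_compose[OF measurable_component_singleton[OF that, of M'] fm[of i]] by simp
    have "(\<lambda>xs. cosh (l * (f (xs i) - mm (lab i) f))) \<in> borel_measurable (PiM {..<n} M')" if "i \<in> {..<n}" for i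
      by (intro borel_measurable_cosh borel_measurable_times borel_measurable_const borel_measurable_diff fc that)
    then show ?thesis
      unfolding H_def
      by (intro borel_measurable_prod_ennreal) (auto intro: measurable_compose[OF _ measurable_ennreal])
  qed
  have Hint: "(\<integral>\<^sup>+xs. H f xs \<partial>PiM {..<n} M') \<le> ennreal (exp (5 * l\<^sup>2 * s2) ^ n)" if f: "f \<in> F" for f
  proof -
    have fm: "f \<in> borel_measurable (M' i)" for i
      unfolding measurable_cong_sets[OF M'p(2)[of i] refl] using Fp[OF f] by simp
    have "(\<integral>\<^sup>+xs. H f xs \<partial>PiM {..<n} M') = (\<Prod>i<n. \<integral>\<^sup>+y. ennreal (cosh (l * (f y - mm (lab i) f))) \<partial>M' i)"
      unfolding H_def
      by (rule Q.product_nn_integral_prod[where f = "\<lambda>i y. ennreal (cosh (l * (f y - mm (lab i) f)))"])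
         (auto intro!: measurable_compose[OF _ measurable_ennreal] borel_measurable_cosh
            borel_measurable_times borel_measurable_diff fm)
    also have "\<dots> \<le> (\<Prod>i<n. ennreal (exp (5 * l\<^sup>2 * s2)))"
    proof (rule prod_mono_ennreal)
      fix i assume i: "i \<in> {..<n}"
      have e: "M' i = \<mu>s (lab i)" using i by (simp add: M'_def)
      show "(\<integral>\<^sup>+y. ennreal (cosh (l * (f y - mm (lab i) f))) \<partial>M' i) \<le> ennreal (exp (5 * l\<^sup>2 * s2))"
        unfolding e mm_def s2_def using Fp[OF f] i labi
        by (intro iso_cosh[OF iso d c L _ _ _ l]) auto
    qed
    also have "\<dots> = ennreal (exp (5 * l\<^sup>2 * s2) ^ n)" by (simp add: ennreal_power)
    finally show ?thesis .
  qed
  have "(\<integral>\<^sup>+xs. ennreal ((\<Sum>\<sigma>\<in>Pn n. Max ((\<lambda>f. \<bar>\<Sum>i<n. \<sigma> i * f (xs i)\<bar>) ` F)) / 2 ^ n) \<partial>PiM {..<n} M')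
      \<le> (\<integral>\<^sup>+xs. ennreal C0 + ennreal c2 * (\<Sum>f\<in>F. H f xs) \<partial>PiM {..<n} M')"
    by (intro nn_integral_mono pw)
  also have "\<dots> = ennreal C0 + ennreal c2 * (\<Sum>f\<in>F. \<integral>\<^sup>+xs. H f xs \<partial>PiM {..<n} M')"
  proof -
    have Sm: "(\<lambda>xs. \<Sum>f\<in>F. H f xs) \<in> borel_measurable (PiM {..<n} M')"
      using Hm by (intro borel_measurable_sum) auto
    have "(\<integral>\<^sup>+xs. ennreal C0 + ennreal c2 * (\<Sum>f\<in>F. H f xs) \<partial>PiM {..<n} M')
        = (\<integral>\<^sup>+xs. ennreal C0 \<partial>PiM {..<n} M') + (\<integral>\<^sup>+xs. ennreal c2 * (\<Sum>f\<in>F. H f xs) \<partial>PiM {..<n} M')"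
      using Sm by (intro nn_integral_add) auto
    also have "(\<integral>\<^sup>+xs. ennreal C0 \<partial>PiM {..<n} M') = ennreal C0"
      by (simp add: QP.emeasure_space_1)
    also have "(\<integral>\<^sup>+xs. ennreal c2 * (\<Sum>f\<in>F. H f xs) \<partial>PiM {..<n} M') = ennreal c2 * (\<integral>\<^sup>+xs. (\<Sum>f\<in>F. H f xs) \<partial>PiM {..<n} M')"
      using Sm by (rule nn_integral_cmult)
    also have "(\<integral>\<^sup>+xs. (\<Sum>f\<in>F. H f xs) \<partial>PiM {..<n} M') = (\<Sum>f\<in>F. \<integral>\<^sup>+xs. H f xs \<partial>PiM {..<n} M')"
      using Hm by (rule nn_integral_sum)
    finally show ?thesis .
  qed
  also have "\<dots> \<le> ennreal C0 + ennreal c2 * (\<Sum>f\<in>F. ennreal (exp (5 * l\<^sup>2 * s2) ^ n))"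
    by (intro add_left_mono mult_left_mono sum_mono Hint) auto
  also have "\<dots> = ennreal (C0 + c2 * (real N * exp (5 * l\<^sup>2 * s2) ^ n))"
  proof -
    let ?E = "exp (5 * l\<^sup>2 * s2) ^ n"
    have E: "?E \<ge> 0" by simp
    have "(\<Sum>f\<in>F. ennreal ?E) = ennreal (real N * ?E)"
      using E by (subst sum_ennreal) (auto simp: N_def)
    also have "ennreal c2 * ennreal (real N * ?E) = ennreal (c2 * (real N * ?E))"
      using c2 E by (simp add: ennreal_mult[symmetric])
    also have "ennreal C0 + ennreal (c2 * (real N * ?E)) = ennreal (C0 + c2 * (real N * ?E))"
      using C0 c2 E by (simp add: ennreal_plus[symmetric] del: ennreal_plus)
    finally show ?thesis by (simp add: mult.assoc)
  qed
  also have "c2 * (real N * exp (5 * l\<^sup>2 * s2) ^ n) = 1 / l"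
  proof -
    have "exp (5 * l\<^sup>2 * s2) ^ n = exp (5 * real n * l\<^sup>2 * s2)"
      by (simp add: exp_of_nat_mult[symmetric] algebra_simps)
    then show ?thesis using W l N2 by (simp add: c2_def W_def field_simps)
  qed
  also have "C0 + 1 / l \<le> 2 * sqrt (real k * real n) + 7 * sqrt (real n * s2 * ln (real N))"
  proof -
    have "ln W = ln 2 + ln (real N) + 5 * (real n * l\<^sup>2 * s2)"
      using N2 by (simp add: W_def ln_mult algebra_simps)
    also have "\<dots> \<le> 7 * ln (real N)"
      using l2 N2 by simp
    finally have lw: "ln W \<le> 7 * ln (real N)" .
    have q: "ln (real N) / l = sqrt (real n * s2 * ln (real N))"
    proof (rule real_sqrt_unique[symmetric])
      show "(ln (real N) / l)\<^sup>2 = real n * s2 * ln (real N)"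
        using l2 l lnN by (simp add: power_divide field_simps power2_eq_square)
      show "0 \<le> ln (real N) / l" using l lnN by simp
    qed
    have "C0 + 1 / l = 2 * sqrt (real k * real n) + ln W / l"
      using l by (simp add: C0_def field_simps)
    also have "ln W / l \<le> 7 * ln (real N) / l" using lw l by (simp add: divide_right_mono)
    also have "7 * ln (real N) / l = 7 * sqrt (real n * s2 * ln (real N))" using q by simp
    finally show ?thesis by simp
  qed
  finally show ?thesis using ennreal_leI unfolding PiM_eq s2_def N_def by blast
qed


lemma avg_abs_2sqrt:
  assumes n: "n \<ge> 1" and V: "(\<Sum>i<n. (b i)\<^sup>2) \<le> real n"
  shows "(\<Sum>\<sigma>\<in>Pn n. \<bar>\<Sum>i<n. \<sigma> i * b i\<bar>) / 2 ^ n \<le> 2 * sqrt (real n)"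
proof -
  define l where "l = 1 / sqrt (real n)"
  have l: "l > 0" using n by (simp add: l_def)
  have "(\<Sum>\<sigma>\<in>Pn n. \<bar>\<Sum>i<n. \<sigma> i * b i\<bar>) / 2 ^ n \<le> (ln 2 + l\<^sup>2 * real n / 2) / l"
    by (rule avg_abs_bound[OF l V])
  also have "\<dots> = sqrt (real n) * (ln 2 + 1 / 2)"
    using n by (simp add: l_def power_divide field_simps)
  also have "\<dots> \<le> sqrt (real n) * 2" using ln_2_less_1 by (intro mult_left_mono) auto
  finally show ?thesis by simp
qed

lemma caseA_pw:
  fixes F :: "((nat \<Rightarrow> real) \<Rightarrow> real) set"
  assumes n: "n \<ge> 1" and F: "finite F" "F \<noteq> {}"
    and xs: "\<And>i. i < n \<Longrightarrow> xs i \<in> S"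
    and fb: "\<And>f x. f \<in> F \<Longrightarrow> x \<in> S \<Longrightarrow> \<bar>f x\<bar> \<le> 1"
    and alt: "card F = 1 \<or> (\<forall>f\<in>F. \<forall>x\<in>S. \<forall>y\<in>S. f x = f y)"
  shows "(\<Sum>\<sigma>\<in>Pn n. Max ((\<lambda>f. \<bar>\<Sum>i<n. \<sigma> i * f (xs i)\<bar>) ` F)) / 2 ^ n \<le> 2 * sqrt (real n)"
proof (cases "card F = 1")
  case True
  then obtain f where Ff: "F = {f}" by (auto simp: card_Suc_eq)
  have V: "(\<Sum>i<n. (f (xs i))\<^sup>2) \<le> real n"
  proof -
    have "(\<Sum>i<n. (f (xs i))\<^sup>2) \<le> (\<Sum>i<n. 1)"
      using fb xs Ff by (intro sum_mono) (auto simp: abs_square_le_1)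
    then show ?thesis by simp
  qed
  show ?thesis using avg_abs_2sqrt[OF n V] by (simp add: Ff)
next
  case False
  with alt have cst: "\<forall>f\<in>F. \<forall>x\<in>S. \<forall>y\<in>S. f x = f y" by simp
  have x0: "xs 0 \<in> S" using xs n by simp
  have "(\<Sum>\<sigma>\<in>Pn n. Max ((\<lambda>f. \<bar>\<Sum>i<n. \<sigma> i * f (xs i)\<bar>) ` F)) / 2 ^ n
      \<le> (\<Sum>\<sigma>\<in>Pn n. \<bar>\<Sum>i<n. \<sigma> i * 1\<bar>) / 2 ^ n"
  proof (intro divide_right_mono sum_mono)
    fix \<sigma> :: "nat \<Rightarrow> real"
    show "Max ((\<lambda>f. \<bar>\<Sum>i<n. \<sigma> i * f (xs i)\<bar>) ` F) \<le> \<bar>\<Sum>i<n. \<sigma> i * 1\<bar>"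
    proof (subst Max_le_iff, safe)
      fix f assume f: "f \<in> F"
      have "(\<Sum>i<n. \<sigma> i * f (xs i)) = (\<Sum>i<n. f (xs 0) * \<sigma> i)"
      proof (rule sum.cong[OF refl])
        fix i assume "i \<in> {..<n}"
        then have "f (xs i) = f (xs 0)" using cst f xs x0 by auto
        then show "\<sigma> i * f (xs i) = f (xs 0) * \<sigma> i" by simp
      qed
      also have "\<dots> = f (xs 0) * (\<Sum>i<n. \<sigma> i)" by (simp add: sum_distrib_left)
      finally have "(\<Sum>i<n. \<sigma> i * f (xs i)) = f (xs 0) * (\<Sum>i<n. \<sigma> i)" .
      then show "\<bar>\<Sum>i<n. \<sigma> i * f (xs i)\<bar> \<le> \<bar>\<Sum>i<n. \<sigma> i * 1\<bar>"
        using fb[OF f x0] by (simp add: abs_mult mult_left_le_one_le)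
    qed (use F in auto)
  qed auto
  also have "\<dots> \<le> 2 * sqrt (real n)" by (rule avg_abs_2sqrt[OF n]) simp
  finally show ?thesis .
qed

theorem mainTheorem7:
  "\<exists>C::real. \<forall>(d::nat) (k::nat) (n::nat) (c::real) (L::real)
      (\<alpha>::nat \<Rightarrow> real) (\<mu>s::nat \<Rightarrow> (nat \<Rightarrow> real) measure) (\<mu>::(nat \<Rightarrow> real) measure)
      (F::((nat \<Rightarrow> real) \<Rightarrow> real) set).
     d \<ge> 1 \<and> k \<ge> 1 \<and> n \<ge> 1 \<and> c > 0 \<and> L \<ge> 0 \<and>
     (\<forall>l\<in>{1..k}. \<alpha> l \<ge> 0) \<and> (\<Sum>l=1..k. \<alpha> l) = 1 \<and>
     (\<forall>l\<in>{1..k}. isoperimetric d c (\<mu>s l)) \<and>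
     prob_space \<mu> \<and> sets \<mu> = sets (Rd d) \<and>
     (\<forall>A\<in>sets \<mu>. measure \<mu> A = (\<Sum>l=1..k. \<alpha> l * measure (\<mu>s l) A)) \<and>
     finite F \<and> F \<noteq> {} \<and>
     (\<forall>f\<in>F. f \<in> borel_measurable (Rd d) \<and> lipschitz_Rd d L f \<and>
              (\<forall>x\<in>space (Rd d). \<bar>f x\<bar> \<le> 1))
     \<longrightarrow> rad n \<mu> F \<le> C * max (sqrt (real k / real n))
                             (L * sqrt (c * ln (real (card F)) / (real n * real d)))"
proof (intro exI[of _ 9] allI impI)
  fix d k n :: nat and c L :: real and \<alpha> :: "nat \<Rightarrow> real"
    and \<mu>s :: "nat \<Rightarrow> (nat \<Rightarrow> real) measure" and \<mu> :: "(nat \<Rightarrow> real) measure"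
    and F :: "((nat \<Rightarrow> real) \<Rightarrow> real) set"
  assume H: "d \<ge> 1 \<and> k \<ge> 1 \<and> n \<ge> 1 \<and> c > 0 \<and> L \<ge> 0 \<and>
     (\<forall>l\<in>{1..k}. \<alpha> l \<ge> 0) \<and> (\<Sum>l=1..k. \<alpha> l) = 1 \<and>
     (\<forall>l\<in>{1..k}. isoperimetric d c (\<mu>s l)) \<and>
     prob_space \<mu> \<and> sets \<mu> = sets (Rd d) \<and>
     (\<forall>A\<in>sets \<mu>. measure \<mu> A = (\<Sum>l=1..k. \<alpha> l * measure (\<mu>s l) A)) \<and>
     finite F \<and> F \<noteq> {} \<and>
     (\<forall>f\<in>F. f \<in> borel_measurable (Rd d) \<and> lipschitz_Rd d L f \<and>
              (\<forall>x\<in>space (Rd d). \<bar>f x\<bar> \<le> 1))"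
  from H have d: "d \<ge> 1" and k: "k \<ge> 1" and n: "n \<ge> 1" and c: "c > 0" and L: "L \<ge> 0"
    and alpha: "\<And>l. l \<in> {1..k} \<Longrightarrow> \<alpha> l \<ge> 0" and asum: "(\<Sum>l=1..k. \<alpha> l) = 1"
    and iso: "\<And>l. l \<in> {1..k} \<Longrightarrow> isoperimetric d c (\<mu>s l)"
    and Pmu: "prob_space \<mu>" and smu: "sets \<mu> = sets (Rd d)"
    and mix: "\<And>A. A \<in> sets \<mu> \<Longrightarrow> measure \<mu> A = (\<Sum>l=1..k. \<alpha> l * measure (\<mu>s l) A)"
    and F: "finite F" and Fne: "F \<noteq> {}"
    and Fp: "\<And>f. f \<in> F \<Longrightarrow> f \<in> borel_measurable (Rd d) \<and> lipschitz_Rd d L f \<and> (\<forall>x\<in>space (Rd d). \<bar>f x\<bar> \<le> 1)"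
    by auto
  define G where "G xs = (\<Sum>\<sigma>\<in>Pn n. Max ((\<lambda>f. \<bar>\<Sum>i<n. \<sigma> i * f (xs i)\<bar>) ` F)) / 2 ^ n" for xs
  define N where "N = card F"
  define T where "T = max (sqrt (real k / real n)) (L * sqrt (c * ln (real N) / (real n * real d)))"
  have N1: "N \<ge> 1" using F Fne by (simp add: N_def card_gt_0_iff Suc_le_eq)
  have lnN: "ln (real N) \<ge> 0" using N1 by simp
  have radeq: "rad n \<mu> F = (1 / real n) * (\<integral>xs. G xs \<partial>PiM {..<n} (\<lambda>_. \<mu>))"
    unfolding rad_def G_def Pn_def by simp
  have T1: "real n * T \<ge> sqrt (real k * real n)"
  proof -
    have "real n * sqrt (real k / real n) = sqrt (real k * real n)"
      using n by (simp add: real_sqrt_divide real_sqrt_mult field_simps)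
    moreover have "real n * sqrt (real k / real n) \<le> real n * T"
      by (intro mult_left_mono) (auto simp: T_def)
    ultimately show ?thesis by simp
  qed
  have T2: "real n * T \<ge> sqrt (real n * (c * L\<^sup>2 / real d) * ln (real N))"
  proof -
    have "real n * (L * sqrt (c * ln (real N) / (real n * real d)))
        = sqrt ((real n)\<^sup>2 * L\<^sup>2 * (c * ln (real N) / (real n * real d)))"
    proof -
      have "sqrt ((real n)\<^sup>2 * L\<^sup>2 * (c * ln (real N) / (real n * real d)))
          = sqrt ((real n)\<^sup>2) * sqrt (L\<^sup>2) * sqrt (c * ln (real N) / (real n * real d))"
        by (simp only: real_sqrt_mult)
      also have "\<dots> = real n * (L * sqrt (c * ln (real N) / (real n * real d)))"
        using L by simp
      finally show ?thesis ..
    qed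
    also have "(real n)\<^sup>2 * L\<^sup>2 * (c * ln (real N) / (real n * real d)) = real n * (c * L\<^sup>2 / real d) * ln (real N)"
      using n d by (simp add: power2_eq_square field_simps)
    finally have e: "real n * (L * sqrt (c * ln (real N) / (real n * real d))) = sqrt (real n * (c * L\<^sup>2 / real d) * ln (real N))" .
    have "real n * (L * sqrt (c * ln (real N) / (real n * real d))) \<le> real n * T"
      by (intro mult_left_mono) (auto simp: T_def)
    then show ?thesis using e by simp
  qed
  have Tnn: "real n * T \<ge> 0" using T1 by (meson order.trans real_sqrt_ge_zero of_nat_0_le_iff mult_nonneg_nonneg)
  have smuPi: "sets (PiM {..<n} (\<lambda>_. \<mu>)) = sets (PiM {..<n} (\<lambda>_. Rd d))"
    by (rule sets_PiM_cong) (auto simp: smu)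
  have spmu: "space \<mu> = space (Rd d)" by (rule sets_eq_imp_space_eq[OF smu])
  interpret PP: prob_space "PiM {..<n} (\<lambda>_. \<mu>)"
    using Pmu by (intro prob_space_PiM) auto
  have xs_sp: "xs i \<in> space (Rd d)" if "xs \<in> space (PiM {..<n} (\<lambda>_. \<mu>))" "i < n" for xs i
    using that by (auto simp: space_PiM PiE_def Pi_def spmu)
  have bound: "(\<integral>\<^sup>+xs. ennreal (G xs) \<partial>PiM {..<n} (\<lambda>_. \<mu>)) \<le> ennreal (9 * (real n * T))"
  proof (cases "N = 1 \<or> L = 0")
    case True
    have "(\<integral>\<^sup>+xs. ennreal (G xs) \<partial>PiM {..<n} (\<lambda>_. \<mu>)) \<le> (\<integral>\<^sup>+xs. ennreal (2 * sqrt (real n)) \<partial>PiM {..<n} (\<lambda>_. \<mu>))"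
    proof (rule nn_integral_mono)
      fix xs assume xs: "xs \<in> space (PiM {..<n} (\<lambda>_. \<mu>))"
      have alt: "card F = 1 \<or> (\<forall>f\<in>F. \<forall>x\<in>space (Rd d). \<forall>y\<in>space (Rd d). f x = f y)"
      proof (cases "N = 1")
        case True then show ?thesis by (simp add: N_def)
      next
        case False
        with \<open>N = 1 \<or> L = 0\<close> have L0: "L = 0" by simp
        show ?thesis
        proof (intro disjI2 ballI)
          fix f x y assume f: "f \<in> F" and xy: "x \<in> space (Rd d)" "y \<in> space (Rd d)"
          have "lipschitz_Rd d L f" using Fp[OF f] by blast
          then have "\<bar>f x - f y\<bar> \<le> L * edist d x y" using xy unfolding lipschitz_Rd_def by blast
          then show "f x = f y" using L0 by simp
        qed
      qed
      have "G xs \<le> 2 * sqrt (real n)"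
        unfolding G_def using Fp xs_sp[OF xs]
        by (intro caseA_pw[OF n F Fne, where S = "space (Rd d)"] alt) auto
      then show "ennreal (G xs) \<le> ennreal (2 * sqrt (real n))" by (rule ennreal_leI)
    qed
    also have "\<dots> = ennreal (2 * sqrt (real n))" by (simp add: PP.emeasure_space_1)
    also have "\<dots> \<le> ennreal (9 * (real n * T))"
    proof (rule ennreal_leI)
      have s: "sqrt (real n) \<le> sqrt (real k * real n)" using k by (intro real_sqrt_le_mono) (simp add: mult_le_cancel_right1)
      show "2 * sqrt (real n) \<le> 9 * (real n * T)" using s T1 real_sqrt_ge_zero[of "real n"] by linarith
    qed
    finally show ?thesis .
  next
    case False
    hence N2: "card F \<ge> 2" and Lp: "L > 0" using N1 L by (auto simp: N_def)
    have Gm: "(\<lambda>xs. ennreal (G xs)) \<in> borel_measurable (PiM {..<n} (\<lambda>_. Rd d))"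
    proof -
      have fc: "(\<lambda>xs. f (xs i)) \<in> borel_measurable (PiM {..<n} (\<lambda>_. Rd d))" if "f \<in> F" "i \<in> {..<n}" for f i
      proof -
        have "f \<in> borel_measurable (Rd d)" using Fp[OF that(1)] by blast
        from measurable_compose[OF measurable_component_singleton[OF that(2), of "\<lambda>_. Rd d"] this]
        show ?thesis by simp
      qed
      have "G \<in> borel_measurable (PiM {..<n} (\<lambda>_. Rd d))"
        unfolding G_def
        by (intro borel_measurable_divide borel_measurable_const borel_measurable_sum borel_measurable_Max
              finite_Pn F borel_measurable_abs borel_measurable_times fc) auto
      then show ?thesis by (rule measurable_compose[OF _ measurable_ennreal])
    qed
    have "(\<integral>\<^sup>+xs. ennreal (G xs) \<partial>PiM {..<n} (\<lambda>_. \<mu>))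
      = (\<Sum>lab\<in>PiE {..<n} (\<lambda>_. {1..k}). ennreal (\<Prod>j\<in>{..<n}. \<alpha> (lab j)) * (\<integral>\<^sup>+xs. ennreal (G xs) \<partial>PiM {..<n} (\<lambda>j. \<mu>s (lab j))))"
      by (rule mixture_PiM[OF smu Pmu _ alpha mix k _ Gm]) (auto simp: iso_basic[OF iso])
    also have "\<dots> \<le> (\<Sum>lab\<in>PiE {..<n} (\<lambda>_. {1..k}). ennreal (\<Prod>j\<in>{..<n}. \<alpha> (lab j)) *
        ennreal (2 * sqrt (real k * real n) + 7 * sqrt (real n * (c * L\<^sup>2 / real d) * ln (real (card F)))))"
      unfolding G_def
      by (intro sum_mono mult_left_mono lab_bound[OF d c Lp n k _ iso F N2 Fp]) auto
    also have "\<dots> = ennreal ((\<Sum>lab\<in>PiE {..<n} (\<lambda>_. {1..k}). \<Prod>j\<in>{..<n}. \<alpha> (lab j)) *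
        (2 * sqrt (real k * real n) + 7 * sqrt (real n * (c * L\<^sup>2 / real d) * ln (real (card F)))))"
    proof -
      have pn: "(\<Prod>j\<in>{..<n}. \<alpha> (lab j)) \<ge> 0" if "lab \<in> PiE {..<n} (\<lambda>_. {1..k})" for lab
        using that alpha by (intro prod_nonneg) (auto simp: PiE_def Pi_def)
      define B where "B = 2 * sqrt (real k * real n) + 7 * sqrt (real n * (c * L\<^sup>2 / real d) * ln (real (card F)))"
      have B: "B \<ge> 0" unfolding B_def using c d lnN by (auto simp: N_def)
      have "(\<Sum>lab\<in>PiE {..<n} (\<lambda>_. {1..k}). ennreal (\<Prod>j\<in>{..<n}. \<alpha> (lab j)) * ennreal B)
          = (\<Sum>lab\<in>PiE {..<n} (\<lambda>_. {1..k}). ennreal ((\<Prod>j\<in>{..<n}. \<alpha> (lab j)) * B))"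
        using pn B by (intro sum.cong refl) (simp add: ennreal_mult)
      also have "\<dots> = ennreal (\<Sum>lab\<in>PiE {..<n} (\<lambda>_. {1..k}). (\<Prod>j\<in>{..<n}. \<alpha> (lab j)) * B)"
        using pn B by (intro sum_ennreal) auto
      also have "\<dots> = ennreal ((\<Sum>lab\<in>PiE {..<n} (\<lambda>_. {1..k}). \<Prod>j\<in>{..<n}. \<alpha> (lab j)) * B)"
        by (simp add: sum_distrib_right)
      finally show ?thesis unfolding B_def .
    qed
    also have "(\<Sum>lab\<in>PiE {..<n} (\<lambda>_. {1..k}). \<Prod>j\<in>{..<n}. \<alpha> (lab j)) = 1"
    proof -
      have "(\<Prod>j\<in>{..<n}. \<Sum>l\<in>{1..k}. \<alpha> l) = (\<Sum>lab\<in>PiE {..<n} (\<lambda>_. {1..k}). \<Prod>j\<in>{..<n}. \<alpha> (lab j))"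
        by (rule prod_sum_PiE) auto
      then show ?thesis using asum by simp
    qed
    also have "ennreal (1 * (2 * sqrt (real k * real n) + 7 * sqrt (real n * (c * L\<^sup>2 / real d) * ln (real (card F)))))
        \<le> ennreal (9 * (real n * T))"
      using T1 T2 by (intro ennreal_leI) (simp add: N_def)
    finally show ?thesis .
  qed
  have Gmu: "(\<integral>xs. G xs \<partial>PiM {..<n} (\<lambda>_. \<mu>)) \<le> 9 * (real n * T)"
    using Tnn bound by (intro integral_real_bounded) auto
  have "rad n \<mu> F = (1 / real n) * (\<integral>xs. G xs \<partial>PiM {..<n} (\<lambda>_. \<mu>))" by (rule radeq)
  also have "\<dots> \<le> (1 / real n) * (9 * (real n * T))"
    using Gmu n by (intro mult_left_mono) auto
  also have "\<dots> = 9 * T" using n by simp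
  finally show "rad n \<mu> F \<le> 9 * max (sqrt (real k / real n))
                             (L * sqrt (c * ln (real (card F)) / (real n * real d)))"
    by (simp add: T_def N_def)
qed


end
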